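(* Let $U$ be a finite nonempty set, $R$ an equivalence relation on $U$, and $M(R)$ the support matroid induced by $R$. Then the family $\mathbf{B}(R)$ of bases of $M(R)$ is $$\mathbf{B}(R)=\{X\subseteq U\mid \forall x\in U,\ |RN(x)\cap X|=1\}.$$
   Context: For $x\in U$, $RN(x)=\{y\in U\mid xRy\}$; $R^{*}(X)=\{x\in U\mid RN(x)\cap X\neq\emptyset\}$. Let $\mathbf{S}(R)=\{X\subseteq U\mid R^{*}(X)=U\}$. The support matroid $M(R)=(U,\mathbf{I}(R))$ is the matroid on $U$ whose independent sets $\mathbf{I}(R)$ are the subsets of inclusion-minimal members of $\mathbf{S}(R)$; it is a matroid whose support sets (subsets of $U$ containing a base) are exactly the members of $\mathbf{S}(R)$. A base of a matroid is an inclusion-maximal independent set. *)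

theory Defs
  imports Main
begin

definition RN :: "('a \<times> 'a) set \<Rightarrow> 'a \<Rightarrow> 'a set" where
  "RN R x = {y. (x, y) \<in> R}"

definition upper_approx :: "'a set \<Rightarrow> ('a \<times> 'a) set \<Rightarrow> 'a set \<Rightarrow> 'a set" where
  "upper_approx U R X = {x \<in> U. RN R x \<inter> X \<noteq> {}}"

definition supp_sets :: "'a set \<Rightarrow> ('a \<times> 'a) set \<Rightarrow> 'a set set" where
  "supp_sets U R = {X. X \<subseteq> U \<and> upper_approx U R X = U}"

definition minimal_supp_sets :: "'a set \<Rightarrow> ('a \<times> 'a) set \<Rightarrow> 'a set set" where
  "minimal_supp_sets U R =
     {X \<in> supp_sets U R. \<forall>Y \<in> supp_sets U R. Y \<subseteq> X \<longrightarrow> Y = X}"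

text \<open>Independent sets of the support matroid M(R): subsets of minimal members of S(R).\<close>
definition supp_indep :: "'a set \<Rightarrow> ('a \<times> 'a) set \<Rightarrow> 'a set set" where
  "supp_indep U R = {I. \<exists>X \<in> minimal_supp_sets U R. I \<subseteq> X}"

definition supp_bases :: "'a set \<Rightarrow> ('a \<times> 'a) set \<Rightarrow> 'a set set" where
  "supp_bases U R =
     {B \<in> supp_indep U R. \<forall>I \<in> supp_indep U R. B \<subseteq> I \<longrightarrow> I = B}"

end

theory Submission
  imports Defs
begin

lemma eqv_facts:
  assumes "equiv U R"
  shows "\<And>x y. (x,y) \<in> R \<Longrightarrow> x \<in> U \<and> y \<in> U"
    and "\<And>x. x \<in> U \<Longrightarrow> (x,x) \<in> R"
    and "\<And>x y. (x,y) \<in> R \<Longrightarrow> (y,x) \<in> R"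
    and "\<And>x y z. (x,y) \<in> R \<Longrightarrow> (y,z) \<in> R \<Longrightarrow> (x,z) \<in> R"
  using assms unfolding equiv_def refl_on_def sym_def trans_def by blast+

lemma transv_char:
  assumes "equiv U R"
  shows "X \<in> minimal_supp_sets U R \<longleftrightarrow> X \<subseteq> U \<and> (\<forall>x \<in> U. \<exists>a. RN R x \<inter> X = {a})"
proof
  note E = eqv_facts[OF assms]
  assume m: "X \<in> minimal_supp_sets U R"
  hence XU: "X \<subseteq> U" and sup: "\<forall>x\<in>U. RN R x \<inter> X \<noteq> {}"
    and mn: "\<forall>Y \<in> supp_sets U R. Y \<subseteq> X \<longrightarrow> Y = X"
    unfolding minimal_supp_sets_def supp_sets_def upper_approx_def by auto
  have "\<exists>a. RN R x \<inter> X = {a}" if xU: "x \<in> U" for x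
  proof (rule ccontr)
    assume na: "\<not> ?thesis"
    obtain a where a: "a \<in> RN R x \<inter> X" using sup xU by blast
    then obtain b where b: "b \<in> RN R x \<inter> X" "b \<noteq> a" using na by blast
    have "X - {b} \<in> supp_sets U R"
      unfolding supp_sets_def upper_approx_def
    proof (intro CollectI conjI)
      show "X - {b} \<subseteq> U" using XU by blast
      show "{z \<in> U. RN R z \<inter> (X - {b}) \<noteq> {}} = U"
      proof (rule ccontr)
        assume "\<not> ?thesis"
        then obtain z where zU: "z \<in> U" and emp: "RN R z \<inter> (X - {b}) = {}" by blast
        obtain c where c: "c \<in> RN R z \<inter> X" using sup zU by blast
        hence cb: "c = b" using emp by blast
        have zb: "(z,b) \<in> R" using c cb unfolding RN_def by blast
        have xb: "(x,b) \<in> R" and xa: "(x,a) \<in> R" using a b unfolding RN_def by auto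
        have "(z,a) \<in> R" using E(4)[OF E(4)[OF zb E(3)[OF xb]] xa] .
        thus False using emp a b unfolding RN_def by blast
      qed
    qed
    hence "X - {b} = X" using mn by blast
    thus False using b by blast
  qed
  thus "X \<subseteq> U \<and> (\<forall>x \<in> U. \<exists>a. RN R x \<inter> X = {a})" using XU by blast
next
  note E = eqv_facts[OF assms]
  assume h: "X \<subseteq> U \<and> (\<forall>x \<in> U. \<exists>a. RN R x \<inter> X = {a})"
  have s: "X \<in> supp_sets U R"
    using h unfolding supp_sets_def upper_approx_def by fastforce
  have "Y = X" if Y: "Y \<in> supp_sets U R" "Y \<subseteq> X" for Y
  proof -
    have "y \<in> Y" if y: "y \<in> X" for y
    proof -
      have yU: "y \<in> U" using h y by blast
      obtain a where a: "RN R y \<inter> X = {a}" using h yU by blast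
      have "y \<in> RN R y" using E(2)[OF yU] unfolding RN_def by blast
      hence "y \<in> RN R y \<inter> X" using y by (rule IntI)
      hence "a = y" using a by simp
      moreover have "RN R y \<inter> Y \<noteq> {}" using Y yU unfolding supp_sets_def upper_approx_def by blast
      moreover obtain w where w: "w \<in> RN R y \<inter> Y" using calculation(2) by blast
      moreover have "w \<in> RN R y \<inter> X" using w Y(2) by blast
      ultimately show ?thesis using a by auto
    qed
    thus ?thesis using Y(2) by blast
  qed
  thus "X \<in> minimal_supp_sets U R" using s unfolding minimal_supp_sets_def by blast
qed

theorem proposition5:
  fixes U :: "'a set" and R :: "('a \<times> 'a) set"
  assumes "finite U" and "U \<noteq> {}" and "equiv U R"
  shows "supp_bases U R = {X. X \<subseteq> U \<and> (\<forall>x \<in> U. card (RN R x \<inter> X) = 1)}"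
proof -
  note E = eqv_facts[OF assms(3)]
  have c1: "\<And>S. card S = 1 \<longleftrightarrow> (\<exists>a. S = {a})" by (simp add: card_1_singleton_iff)
  have sub: "X = T" if X: "X \<in> minimal_supp_sets U R" and TT: "T \<in> minimal_supp_sets U R"
    and XT: "X \<subseteq> T" for X T
  proof -
    have "t \<in> X" if t: "t \<in> T" for t
    proof -
      have TT': "T \<subseteq> U \<and> (\<forall>x \<in> U. \<exists>a. RN R x \<inter> T = {a})" using TT by (simp add: transv_char[OF assms(3)])
      have XX': "X \<subseteq> U \<and> (\<forall>x \<in> U. \<exists>a. RN R x \<inter> X = {a})" using X by (simp add: transv_char[OF assms(3)])
      have tU: "t \<in> U" using TT' t by blast
      obtain a where a: "RN R t \<inter> T = {a}" using TT' tU by blast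
      obtain b where b: "RN R t \<inter> X = {b}" using XX' tU by blast
      have "t \<in> RN R t" using E(2)[OF tU] unfolding RN_def by blast
      hence "t \<in> RN R t \<inter> T" using t by (rule IntI)
      hence "a = t" using a by simp
      have "b \<in> RN R t \<inter> T" using b XT by blast
      hence "b = t" using a \<open>a = t\<close> by auto
      thus ?thesis using b by auto
    qed
    thus ?thesis using XT by blast
  qed
  have "B \<in> supp_bases U R \<longleftrightarrow> B \<in> minimal_supp_sets U R" for B
  proof
    assume "B \<in> supp_bases U R"
    hence i: "B \<in> supp_indep U R" and mx: "\<forall>I \<in> supp_indep U R. B \<subseteq> I \<longrightarrow> I = B"
      unfolding supp_bases_def by auto
    obtain X where X: "X \<in> minimal_supp_sets U R" "B \<subseteq> X" using i unfolding supp_indep_def by blast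
    have "X \<in> supp_indep U R" using X unfolding supp_indep_def by blast
    thus "B \<in> minimal_supp_sets U R" using mx X by blast
  next
    assume B: "B \<in> minimal_supp_sets U R"
    have "B \<in> supp_indep U R" using B unfolding supp_indep_def by blast
    moreover have "I = B" if hI: "I \<in> supp_indep U R" "B \<subseteq> I" for I
    proof -
      obtain X where X: "X \<in> minimal_supp_sets U R" "I \<subseteq> X" using hI(1) unfolding supp_indep_def by blast
      have "B = X" using sub[OF B X(1)] X hI by blast
      thus ?thesis using X hI by blast
    qed
    ultimately show "B \<in> supp_bases U R" unfolding supp_bases_def by blast
  qed
  hence "\<And>B. B \<in> supp_bases U R \<longleftrightarrow> B \<subseteq> U \<and> (\<forall>x \<in> U. card (RN R x \<inter> B) = 1)"
    by (simp only: c1 transv_char[OF assms(3)])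
  thus ?thesis by blast
qed

end
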